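(* Let $n\ge3$ and suppose $T=T_\lambda(r,m)$ acts linearly and inner faithfully on $\Bbbk\overline{Q}$, where $g$ acts either as a rotation ($g\cdot e_i=e_{i+d}$, $g\cdot a_i=\mu_ia_{i+d}$, $g\cdot a_i^*=\mu_i^*a^*_{i+d}$) or as a reflection ($g\cdot e_i=e_{n-(d+i)}$, $g\cdot a_i=\mu_ia^*_{n-(d+i+1)}$, $g\cdot a_i^*=\mu_i^*a_{n-(d+i+1)}$), with $0\le d\le n-1$ and $\mu_i,\mu_i^*\in\Bbbk^\times$. Then the action descends to an action on $\Pi_Q$ if and only if for all $i$ $$\mu_i\mu_i^*-\mu_{i+1}\mu_{i+1}^*=0$$ and $$a_i^*\sigma(a_i)+\sigma(a_i^* )(g\cdot a_i)-a_{i+1}\sigma(a_{i+1}^* )-\sigma(a_{i+1})(g\cdot a_{i+1}^* )=0 \quad\text{in }\Pi_Q.$$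
   Context: Let $\Bbbk$ be a field, $r>1$ and $m$ positive integers with $r\mid m$, and $\lambda\in\Bbbk$ a primitive $r$-th root of unity, with $r$ coprime to the characteristic of $\Bbbk$. The generalized Taft algebra $T=T_\lambda(r,m)$ is the Hopf algebra generated by $g,x$ with relations $gx=\lambda xg$, $g^m=1$, $x^r=0$, $\Delta(g)=g\otimes g$, $\Delta(x)=1\otimes x+x\otimes g$, $\varepsilon(g)=1,\varepsilon(x)=0$, $S(g)=g^{-1}$, $S(x)=-xg^{-1}$. An action of $T$ on an algebra $A$ is a $T$-module algebra structure; so $g$ acts by an algebra automorphism and $x\cdot(ab)=a(x\cdot b)+(x\cdot a)(g\cdot b)$. It is inner faithful if no nonzero Hopf ideal $I$ of $T$ satisfies $I\cdot A=0$. Vertex indices are taken modulo $n$. $\overline{Q}$ has vertices $0,\dots,n-1$ and arrows $a_i:i\to i+1$, $a_i^*:i+1\to i$; in $\Bbbk\overline{Q}$, $e_i$ is the trivial path at $i$, $s(a),t(a)$ source and target, and $pq$ is the concatenation ($p$ then $q$) if $t(p)=s(q)$, else $0$. $\Pi_Q=\Bbbk\overline{Q}/(\Omega)$, $(\Omega)$ the ideal generated by $a_i^*a_i-a_{i+1}a_{i+1}^*$. The action descends to $\Pi_Q$ if $(\Omega)$ is stable under $g$ and $x$. A linear action: $g$ acts by a path-length-preserving automorphism ($g\cdot e_i=e_{g\cdot i}$) and $x$ maps vertices into the span of vertices and arrows into the span of vertices and arrows. Then there are scalars $\gamma_i$ with $x\cdot e_i=\gamma_ie_i-\gamma_i\lambda^{-1}e_{g\cdot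 i}$; the quiver-Taft map $\sigma$ is the linear map on the span of vertices and arrows with $\sigma(e_i)=0$ and $\sigma(a)=x\cdot a-\gamma_{t(a)}a+\gamma_{s(a)}\lambda^{-1}(g\cdot a)$ for arrows $a$. *)

theory Defs
  imports Main
begin

inductive_set lspan :: "('a \<Rightarrow> 'k::field) set \<Rightarrow> ('a \<Rightarrow> 'k) set" for S where
  lspan_zero: "(\<lambda>_. 0) \<in> lspan S"
| lspan_step: "s \<in> S \<Longrightarrow> v \<in> lspan S \<Longrightarrow> (\<lambda>p. c * s p + v p) \<in> lspan S"

definition fbasis :: "'a \<Rightarrow> 'a \<Rightarrow> 'k::field" where
  "fbasis x = (\<lambda>y. if y = x then 1 else 0)"

text \<open>Ar i is the arrow a_i : i -> i+1, As i is the arrow a_i^* : i+1 -> i (indices mod n).\<close>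
datatype arr = Ar nat | As nat

fun aidx :: "arr \<Rightarrow> nat" where
  "aidx (Ar i) = i" | "aidx (As i) = i"

fun asrc :: "nat \<Rightarrow> arr \<Rightarrow> nat" where
  "asrc n (Ar i) = i" | "asrc n (As i) = (i + 1) mod n"

fun atgt :: "nat \<Rightarrow> arr \<Rightarrow> nat" where
  "atgt n (Ar i) = (i + 1) mod n" | "atgt n (As i) = i"

text \<open>A path is a start vertex together with a list of composable arrows
  (the empty list is the trivial path e_v).\<close>
type_synonym path = "nat \<times> arr list"

fun pvalid :: "nat \<Rightarrow> nat \<Rightarrow> arr list \<Rightarrow> bool" where
  "pvalid n v [] = (v < n)"
| "pvalid n v (a # as) = (v < n \<and> aidx a < n \<and> asrc n a = v \<and> pvalid n (atgt n a) as)"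

fun pend :: "nat \<Rightarrow> nat \<Rightarrow> arr list \<Rightarrow> nat" where
  "pend n v [] = v"
| "pend n v (a # as) = pend n (atgt n a) as"

definition PA :: "nat \<Rightarrow> (path \<Rightarrow> 'k::field) set" where
  "PA n = {f. finite {p. f p \<noteq> 0} \<and> (\<forall>p. f p \<noteq> 0 \<longrightarrow> pvalid n (fst p) (snd p))}"

text \<open>Multiplication: concatenation of paths (p then q), extended bilinearly.\<close>
definition pmult :: "nat \<Rightarrow> (path \<Rightarrow> 'k::field) \<Rightarrow> (path \<Rightarrow> 'k) \<Rightarrow> (path \<Rightarrow> 'k)" where
  "pmult n f h = (\<lambda>(v, as). if pvalid n v as then
      (\<Sum>k\<in>{0..length as}. f (v, take k as) * h (pend n v (take k as), drop k as)) else 0)"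

definition pone :: "nat \<Rightarrow> path \<Rightarrow> 'k::field" where
  "pone n = (\<lambda>(v, as). if as = [] \<and> v < n then 1 else 0)"

definition padd :: "(path \<Rightarrow> 'k::field) \<Rightarrow> (path \<Rightarrow> 'k) \<Rightarrow> (path \<Rightarrow> 'k)" where
  "padd f h = (\<lambda>p. f p + h p)"

definition psub :: "(path \<Rightarrow> 'k::field) \<Rightarrow> (path \<Rightarrow> 'k) \<Rightarrow> (path \<Rightarrow> 'k)" where
  "psub f h = (\<lambda>p. f p - h p)"

definition psmult :: "'k::field \<Rightarrow> (path \<Rightarrow> 'k) \<Rightarrow> (path \<Rightarrow> 'k)" where
  "psmult c f = (\<lambda>p. c * f p)"

definition vert :: "nat \<Rightarrow> path \<Rightarrow> 'k::field" where
  "vert i = fbasis (i, [])"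

definition arrow :: "nat \<Rightarrow> arr \<Rightarrow> path \<Rightarrow> 'k::field" where
  "arrow n a = fbasis (asrc n a, [a])"

definition omega :: "nat \<Rightarrow> nat \<Rightarrow> path \<Rightarrow> 'k::field" where
  "omega n i = psub (pmult n (arrow n (As i)) (arrow n (Ar i)))
                    (pmult n (arrow n (Ar ((i + 1) mod n))) (arrow n (As ((i + 1) mod n))))"

definition OmegaIdeal :: "nat \<Rightarrow> (path \<Rightarrow> 'k::field) set" where
  "OmegaIdeal n = lspan {pmult n (pmult n (fbasis p) (omega n i)) (fbasis q) | p q i.
      pvalid n (fst p) (snd p) \<and> pvalid n (fst q) (snd q) \<and> i < n}"

text \<open>G and X are the actions of the generators g and x.  The module-algebra axioms
  on generators together with the defining relations of T.\<close>
definition taft_module_algebra ::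
  "nat \<Rightarrow> 'k::field \<Rightarrow> nat \<Rightarrow> nat \<Rightarrow> ((path \<Rightarrow> 'k) \<Rightarrow> (path \<Rightarrow> 'k)) \<Rightarrow> ((path \<Rightarrow> 'k) \<Rightarrow> (path \<Rightarrow> 'k)) \<Rightarrow> bool"
  where
  "taft_module_algebra n lam r m G X \<longleftrightarrow>
     (\<forall>a\<in>PA n. G a \<in> PA n \<and> X a \<in> PA n) \<and>
     (\<forall>a\<in>PA n. \<forall>b\<in>PA n. G (padd a b) = padd (G a) (G b) \<and> X (padd a b) = padd (X a) (X b)) \<and>
     (\<forall>a\<in>PA n. \<forall>c. G (psmult c a) = psmult c (G a) \<and> X (psmult c a) = psmult c (X a)) \<and>
     (\<forall>a\<in>PA n. \<forall>b\<in>PA n. G (pmult n a b) = pmult n (G a) (G b)) \<and>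
     G (pone n) = pone n \<and>
     (\<forall>a\<in>PA n. \<forall>b\<in>PA n. X (pmult n a b) = padd (pmult n a (X b)) (pmult n (X a) (G b))) \<and>
     X (pone n) = (\<lambda>_. 0) \<and>
     (\<forall>a\<in>PA n. (G ^^ m) a = a) \<and>
     (\<forall>a\<in>PA n. (X ^^ r) a = (\<lambda>_. 0)) \<and>
     (\<forall>a\<in>PA n. G (X a) = psmult lam (X (G a)))"

section \<open>The Hopf algebra T_lambda(r,m), with basis g^a x^b (a < m, b < r)\<close>

type_synonym tidx = "nat \<times> nat"

definition TI :: "nat \<Rightarrow> nat \<Rightarrow> tidx set" where
  "TI r m = {..<m} \<times> {..<r}"

definition Tcarrier :: "nat \<Rightarrow> nat \<Rightarrow> (tidx \<Rightarrow> 'k::field) set" where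
  "Tcarrier r m = {h. \<forall>p. h p \<noteq> 0 \<longrightarrow> p \<in> TI r m}"

text \<open>Structure constants: (g^a x^b)(g^c x^d) = lambda^{-bc} g^{a+c} x^{b+d}.\<close>
definition tsc :: "'k::field \<Rightarrow> nat \<Rightarrow> nat \<Rightarrow> tidx \<Rightarrow> tidx \<Rightarrow> tidx \<Rightarrow> 'k" where
  "tsc lam r m p1 p2 p = (case (p1, p2, p) of ((a, b), (c, d), (i, j)) \<Rightarrow>
      if i = (a + c) mod m \<and> j = b + d \<and> j < r then (inverse lam) ^ (b * c) else 0)"

definition tmult :: "'k::field \<Rightarrow> nat \<Rightarrow> nat \<Rightarrow> (tidx \<Rightarrow> 'k) \<Rightarrow> (tidx \<Rightarrow> 'k) \<Rightarrow> (tidx \<Rightarrow> 'k)" where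
  "tmult lam r m f h = (\<lambda>p. \<Sum>p1\<in>TI r m. \<Sum>p2\<in>TI r m. f p1 * h p2 * tsc lam r m p1 p2 p)"

definition ttmult :: "'k::field \<Rightarrow> nat \<Rightarrow> nat \<Rightarrow> (tidx \<times> tidx \<Rightarrow> 'k) \<Rightarrow> (tidx \<times> tidx \<Rightarrow> 'k) \<Rightarrow> (tidx \<times> tidx \<Rightarrow> 'k)" where
  "ttmult lam r m F H = (\<lambda>(p, q). \<Sum>u\<in>TI r m \<times> TI r m. \<Sum>w\<in>TI r m \<times> TI r m.
      F u * H w * tsc lam r m (fst u) (fst w) p * tsc lam r m (snd u) (snd w) q)"

definition tensor :: "(tidx \<Rightarrow> 'k::field) \<Rightarrow> (tidx \<Rightarrow> 'k) \<Rightarrow> (tidx \<times> tidx \<Rightarrow> 'k)" where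
  "tensor u v = (\<lambda>(p, q). u p * v q)"

definition tone :: "tidx \<Rightarrow> 'k::field" where "tone = fbasis (0, 0)"
definition tg :: "nat \<Rightarrow> tidx \<Rightarrow> 'k::field" where "tg m = fbasis (1 mod m, 0)"
definition tx :: "tidx \<Rightarrow> 'k::field" where "tx = fbasis (0, 1)"
definition tginv :: "nat \<Rightarrow> tidx \<Rightarrow> 'k::field" where "tginv m = fbasis (m - 1, 0)"

definition tbasis :: "tidx \<Rightarrow> tidx \<Rightarrow> 'k::field" where "tbasis p = fbasis p"

text \<open>Comultiplication: the algebra map with g |-> g (x) g and x |-> 1 (x) x + x (x) g.\<close>
definition tDelta_g :: "nat \<Rightarrow> tidx \<times> tidx \<Rightarrow> 'k::field" where
  "tDelta_g m = tensor (tg m) (tg m)"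

definition tDelta_x :: "nat \<Rightarrow> tidx \<times> tidx \<Rightarrow> 'k::field" where
  "tDelta_x m = (\<lambda>z. tensor tone tx z + tensor tx (tg m) z)"

definition tDelta :: "'k::field \<Rightarrow> nat \<Rightarrow> nat \<Rightarrow> (tidx \<Rightarrow> 'k) \<Rightarrow> (tidx \<times> tidx \<Rightarrow> 'k)" where
  "tDelta lam r m h = (\<lambda>z. \<Sum>(a, b)\<in>TI r m. h (a, b) *
      ttmult lam r m ((ttmult lam r m (tDelta_g m) ^^ a) (tensor tone tone))
                     ((ttmult lam r m (tDelta_x m) ^^ b) (tensor tone tone)) z)"

definition teps :: "nat \<Rightarrow> nat \<Rightarrow> (tidx \<Rightarrow> 'k::field) \<Rightarrow> 'k" where
  "teps r m h = (\<Sum>a<m. h (a, 0))"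

text \<open>Antipode: S(g^a x^b) = S(x)^b S(g)^a with S(g) = g^{-1}, S(x) = - x g^{-1}.\<close>
definition tSx :: "'k::field \<Rightarrow> nat \<Rightarrow> nat \<Rightarrow> tidx \<Rightarrow> 'k" where
  "tSx lam r m = (\<lambda>p. - tmult lam r m tx (tginv m) p)"

definition tS :: "'k::field \<Rightarrow> nat \<Rightarrow> nat \<Rightarrow> (tidx \<Rightarrow> 'k) \<Rightarrow> (tidx \<Rightarrow> 'k)" where
  "tS lam r m h = (\<lambda>p. \<Sum>(a, b)\<in>TI r m. h (a, b) *
      tmult lam r m ((tmult lam r m (tSx lam r m) ^^ b) tone)
                    ((tmult lam r m (tginv m) ^^ a) tone) p)"

definition hopf_ideal :: "'k::field \<Rightarrow> nat \<Rightarrow> nat \<Rightarrow> (tidx \<Rightarrow> 'k) set \<Rightarrow> bool" where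
  "hopf_ideal lam r m I \<longleftrightarrow>
     I \<subseteq> Tcarrier r m \<and> (\<lambda>_. 0) \<in> I \<and>
     (\<forall>h\<in>I. \<forall>h'\<in>I. (\<lambda>p. h p + h' p) \<in> I) \<and>
     (\<forall>h\<in>I. \<forall>c. (\<lambda>p. c * h p) \<in> I) \<and>
     (\<forall>h\<in>I. \<forall>t\<in>Tcarrier r m. tmult lam r m t h \<in> I \<and> tmult lam r m h t \<in> I) \<and>
     (\<forall>h\<in>I. tDelta lam r m h \<in>
        lspan {tensor u v | u v. (u \<in> I \<and> v \<in> Tcarrier r m) \<or> (u \<in> Tcarrier r m \<and> v \<in> I)}) \<and>
     (\<forall>h\<in>I. teps r m h = 0) \<and>
     (\<forall>h\<in>I. tS lam r m h \<in> I)"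

definition tact :: "nat \<Rightarrow> nat \<Rightarrow> ((path \<Rightarrow> 'k::field) \<Rightarrow> (path \<Rightarrow> 'k)) \<Rightarrow> ((path \<Rightarrow> 'k) \<Rightarrow> (path \<Rightarrow> 'k))
    \<Rightarrow> (tidx \<Rightarrow> 'k) \<Rightarrow> (path \<Rightarrow> 'k) \<Rightarrow> (path \<Rightarrow> 'k)" where
  "tact r m G X h f = (\<lambda>p. \<Sum>(a, b)\<in>TI r m. h (a, b) * (G ^^ a) ((X ^^ b) f) p)"

definition inner_faithful ::
  "nat \<Rightarrow> 'k::field \<Rightarrow> nat \<Rightarrow> nat \<Rightarrow> ((path \<Rightarrow> 'k) \<Rightarrow> (path \<Rightarrow> 'k)) \<Rightarrow> ((path \<Rightarrow> 'k) \<Rightarrow> (path \<Rightarrow> 'k)) \<Rightarrow> bool"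
  where
  "inner_faithful n lam r m G X \<longleftrightarrow>
     \<not> (\<exists>I. hopf_ideal lam r m I \<and> (\<exists>h\<in>I. h \<noteq> (\<lambda>_. 0)) \<and>
            (\<forall>h\<in>I. \<forall>f\<in>PA n. tact r m G X h f = (\<lambda>_. 0)))"

definition x_linear :: "nat \<Rightarrow> ((path \<Rightarrow> 'k::field) \<Rightarrow> (path \<Rightarrow> 'k)) \<Rightarrow> bool" where
  "x_linear n X \<longleftrightarrow>
     (\<forall>i<n. X (vert i) \<in> lspan (fbasis ` {p. pvalid n (fst p) (snd p) \<and> snd p = []})) \<and>
     (\<forall>a. aidx a < n \<longrightarrow>
        X (arrow n a) \<in> lspan (fbasis ` {p. pvalid n (fst p) (snd p) \<and> length (snd p) \<le> 1}))"

definition g_rotation ::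
  "nat \<Rightarrow> nat \<Rightarrow> (nat \<Rightarrow> 'k::field) \<Rightarrow> (nat \<Rightarrow> 'k) \<Rightarrow> ((path \<Rightarrow> 'k) \<Rightarrow> (path \<Rightarrow> 'k)) \<Rightarrow> bool" where
  "g_rotation n d mu mus G \<longleftrightarrow>
     (\<forall>i<n. G (vert i) = vert ((i + d) mod n) \<and>
            G (arrow n (Ar i)) = psmult (mu i) (arrow n (Ar ((i + d) mod n))) \<and>
            G (arrow n (As i)) = psmult (mus i) (arrow n (As ((i + d) mod n))))"

definition g_reflection ::
  "nat \<Rightarrow> nat \<Rightarrow> (nat \<Rightarrow> 'k::field) \<Rightarrow> (nat \<Rightarrow> 'k) \<Rightarrow> ((path \<Rightarrow> 'k) \<Rightarrow> (path \<Rightarrow> 'k)) \<Rightarrow> bool" where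
  "g_reflection n d mu mus G \<longleftrightarrow>
     (\<forall>i<n. G (vert i) = vert ((2 * n - (d + i)) mod n) \<and>
            G (arrow n (Ar i)) = psmult (mu i) (arrow n (As ((2 * n - (d + i + 1)) mod n))) \<and>
            G (arrow n (As i)) = psmult (mus i) (arrow n (Ar ((2 * n - (d + i + 1)) mod n))))"

text \<open>The scalars gamma_i with x.e_i = gamma_i e_i - gamma_i lambda^{-1} e_{g.i}
  (they exist and are unique for a linear action).\<close>
definition gammas :: "nat \<Rightarrow> 'k::field \<Rightarrow> ((path \<Rightarrow> 'k) \<Rightarrow> (path \<Rightarrow> 'k)) \<Rightarrow> ((path \<Rightarrow> 'k) \<Rightarrow> (path \<Rightarrow> 'k)) \<Rightarrow> nat \<Rightarrow> 'k"
  where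
  "gammas n lam G X = (SOME \<gamma>. \<forall>i<n.
      X (vert i) = (\<lambda>p. \<gamma> i * vert i p - \<gamma> i * inverse lam * G (vert i) p))"

definition qsigma :: "nat \<Rightarrow> 'k::field \<Rightarrow> ((path \<Rightarrow> 'k) \<Rightarrow> (path \<Rightarrow> 'k)) \<Rightarrow> ((path \<Rightarrow> 'k) \<Rightarrow> (path \<Rightarrow> 'k))
    \<Rightarrow> arr \<Rightarrow> (path \<Rightarrow> 'k)" where
  "qsigma n lam G X a = (\<lambda>p. X (arrow n a) p
      - gammas n lam G X (atgt n a) * arrow n a p
      + gammas n lam G X (asrc n a) * inverse lam * G (arrow n a) p)"

definition descends :: "nat \<Rightarrow> ((path \<Rightarrow> 'k::field) \<Rightarrow> (path \<Rightarrow> 'k)) \<Rightarrow> ((path \<Rightarrow> 'k) \<Rightarrow> (path \<Rightarrow> 'k)) \<Rightarrow> bool" where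
  "descends n G X \<longleftrightarrow> (\<forall>w\<in>OmegaIdeal n. G w \<in> OmegaIdeal n \<and> X w \<in> OmegaIdeal n)"

end

theory Submission
  imports Defs
begin

lemma lspan_add: "f \<in> lspan S \<Longrightarrow> g \<in> lspan S \<Longrightarrow> (\<lambda>p. f p + g p) \<in> lspan S"
proof (induction f rule: lspan.induct)
  case lspan_zero then show ?case by simp
next
  case (lspan_step s v c)
  have "(\<lambda>p. c * s p + v p + g p) = (\<lambda>p. c * s p + (v p + g p))" by (simp add: algebra_simps)
  then show ?case using lspan_step by (simp add: lspan.lspan_step)
qed

lemma lspan_smult: "f \<in> lspan S \<Longrightarrow> (\<lambda>p. c * f p) \<in> lspan S"
proof (induction f rule: lspan.induct)
  case lspan_zero then show ?case by (simp add: lspan.lspan_zero)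
next
  case (lspan_step s v e)
  have "(\<lambda>p. c * (e * s p + v p)) = (\<lambda>p. (c*e) * s p + c * v p)" by (simp add: algebra_simps)
  then show ?case using lspan_step by (simp add: lspan.lspan_step)
qed

lemma lspan_base: "s \<in> S \<Longrightarrow> s \<in> lspan S"
proof -
  assume "s \<in> S"
  have "(\<lambda>p. 1 * s p + (\<lambda>_. 0) p) \<in> lspan S" by (rule lspan.lspan_step[OF \<open>s \<in> S\<close> lspan.lspan_zero])
  then show ?thesis by simp
qed

lemma lspan_lin: "f \<in> lspan S \<Longrightarrow> g \<in> lspan S \<Longrightarrow> (\<lambda>p. c * f p + e * g p) \<in> lspan S"
  using lspan_add[OF lspan_smult lspan_smult] by blast

lemma lspan_sub: "f \<in> lspan S \<Longrightarrow> g \<in> lspan S \<Longrightarrow> (\<lambda>p. f p - g p) \<in> lspan S"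
  using lspan_lin[of f S g 1 "-1"] by simp

lemma lspan_sub_iff: "g \<in> lspan S \<Longrightarrow> ((\<lambda>p. f p + g p) \<in> lspan S) = (f \<in> lspan S)"
proof
  assume "g \<in> lspan S" "(\<lambda>p. f p + g p) \<in> lspan S"
  from lspan_sub[OF this(2) this(1)] show "f \<in> lspan S" by simp
qed (simp add: lspan_add)

lemma lspan_subset: "f \<in> lspan S \<Longrightarrow> S \<subseteq> lspan T \<Longrightarrow> f \<in> lspan T"
proof (induction f rule: lspan.induct)
  case lspan_zero then show ?case by (simp add: lspan.lspan_zero)
next
  case (lspan_step s v c)
  then show ?case using lspan_add[OF lspan_smult] by blast
qed

lemma lspan_zero': "(\<lambda>_. 0) \<in> lspan S" by (rule lspan.lspan_zero)

lemma pvalid_lt: "pvalid n v xs \<Longrightarrow> v < n"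
  by (cases xs) auto

lemma pvalid_append: "pvalid n v (xs @ ys) = (pvalid n v xs \<and> pvalid n (pend n v xs) ys)"
  by (induction xs arbitrary: v) (auto dest: pvalid_lt)

lemma pend_append: "pend n v (xs @ ys) = pend n (pend n v xs) ys"
  by (induction xs arbitrary: v) auto

lemma fbasis_apply: "fbasis x y = (if y = x then 1 else 0)"
  by (simp add: fbasis_def)

lemma pmult_fbasis:
  "pmult n (fbasis (v, xs)) (fbasis (w, ys)) =
    (if pvalid n v xs \<and> pvalid n w ys \<and> pend n v xs = w then fbasis (v, xs @ ys) else (\<lambda>_. 0))"
proof (rule ext, clarify)
  fix u as
  show "pmult n (fbasis (v, xs)) (fbasis (w, ys)) (u, as) =
    (if pvalid n v xs \<and> pvalid n w ys \<and> pend n v xs = w then fbasis (v, xs @ ys) else (\<lambda>_. 0)) (u, as)"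
  proof (cases "pvalid n u as")
    case False
    then show ?thesis by (auto simp: pmult_def fbasis_def pvalid_append)
  next
    case True
    have eq: "\<And>k. k \<in> {0..length as} \<Longrightarrow>
       fbasis (v, xs) (u, take k as) * fbasis (w, ys) (pend n u (take k as), drop k as)
       = (if k = length xs then (if u = v \<and> as = xs @ ys \<and> pend n v xs = w then 1 else 0) else 0)"
    proof -
      fix k assume k: "k \<in> {0..length as}"
      show "fbasis (v, xs) (u, take k as) * fbasis (w, ys) (pend n u (take k as), drop k as)
       = (if k = length xs then (if u = v \<and> as = xs @ ys \<and> pend n v xs = w then 1 else 0) else 0)"
      proof -
        have L: "fbasis (v, xs) (u, take k as) * fbasis (w, ys) (pend n u (take k as), drop k as)
          = (if u = v \<and> (take k as = xs \<and> drop k as = ys) \<and> pend n u (take k as) = w then 1 else 0)"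
          by (auto simp: fbasis_def)
        have C: "(take k as = xs \<and> drop k as = ys) = (k = length xs \<and> as = xs @ ys)"
        proof
          assume h: "take k as = xs \<and> drop k as = ys"
          then have "as = xs @ ys" by (metis append_take_drop_id)
          moreover have "length xs = k" using h k by auto
          ultimately show "k = length xs \<and> as = xs @ ys" by simp
        qed simp
        show ?thesis unfolding L C by auto
      qed
    qed
    have "pmult n (fbasis (v, xs)) (fbasis (w, ys)) (u, as) =
      (\<Sum>k\<in>{0..length as}. fbasis (v, xs) (u, take k as) * fbasis (w, ys) (pend n u (take k as), drop k as))"
      using True by (simp add: pmult_def)
    also have "\<dots> = (\<Sum>k\<in>{0..length as}. (if k = length xs then (if u = v \<and> as = xs @ ys \<and> pend n v xs = w then 1 else 0) else 0))"
      by (rule sum.cong[OF refl eq])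
    also have "\<dots> = (if length xs \<in> {0..length as} then (if u = v \<and> as = xs @ ys \<and> pend n v xs = w then 1 else 0) else 0)"
      by (rule sum.delta, simp)
    also have "\<dots> = (if u = v \<and> as = xs @ ys \<and> pend n v xs = w then 1 else 0)"
      by auto
    finally show ?thesis using True by (auto simp: fbasis_def pvalid_append)
  qed
qed

lemma pmult_zero_left[simp]: "pmult n (\<lambda>_. 0) h = (\<lambda>_. 0)"
  by (auto simp: pmult_def)
lemma pmult_zero_right[simp]: "pmult n h (\<lambda>_. 0) = (\<lambda>_. 0)"
  by (auto simp: pmult_def)

lemma pmult_add_left: "pmult n (\<lambda>p. f p + g p) h = (\<lambda>p. pmult n f h p + pmult n g h p)"
  by (auto simp: pmult_def sum.distrib algebra_simps)
lemma pmult_add_right: "pmult n h (\<lambda>p. f p + g p) = (\<lambda>p. pmult n h f p + pmult n h g p)"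
  by (auto simp: pmult_def sum.distrib algebra_simps)
lemma pmult_diff_left: "pmult n (\<lambda>p. f p - g p) h = (\<lambda>p. pmult n f h p - pmult n g h p)"
  by (auto simp: pmult_def sum_subtractf algebra_simps)
lemma pmult_diff_right: "pmult n h (\<lambda>p. f p - g p) = (\<lambda>p. pmult n h f p - pmult n h g p)"
  by (auto simp: pmult_def sum_subtractf algebra_simps)
lemma pmult_smult_left: "pmult n (\<lambda>p. c * f p) h = (\<lambda>p. c * pmult n f h p)"
  by (auto simp: pmult_def sum_distrib_left algebra_simps)
lemma pmult_smult_right: "pmult n h (\<lambda>p. c * f p) = (\<lambda>p. c * pmult n h f p)"
  by (auto simp: pmult_def sum_distrib_left algebra_simps)

definition PB :: "nat \<Rightarrow> (path \<Rightarrow> 'k::field) set" where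
  "PB n = fbasis ` {p. pvalid n (fst p) (snd p)}"

lemma fbasis_PA: "pvalid n (fst x) (snd x) \<Longrightarrow> fbasis x \<in> PA n"
  by (auto simp: PA_def fbasis_def)

lemma zero_PA: "(\<lambda>_. 0) \<in> PA n"
  by (auto simp: PA_def)

lemma PA_lin: "f \<in> PA n \<Longrightarrow> g \<in> PA n \<Longrightarrow> (\<lambda>p. c * f p + g p) \<in> PA n"
proof -
  assume f: "f \<in> PA n" and g: "g \<in> PA n"
  have "{p. c * f p + g p \<noteq> 0} \<subseteq> {p. f p \<noteq> 0} \<union> {p. g p \<noteq> 0}" by auto
  moreover have "finite ({p. f p \<noteq> 0} \<union> {p. g p \<noteq> 0})" using f g by (auto simp: PA_def)
  ultimately have "finite {p. c * f p + g p \<noteq> 0}" by (rule finite_subset)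
  moreover have "\<forall>p. c * f p + g p \<noteq> 0 \<longrightarrow> pvalid n (fst p) (snd p)"
  proof (intro allI impI)
    fix p assume "c * f p + g p \<noteq> 0"
    then have "f p \<noteq> 0 \<or> g p \<noteq> 0" by auto
    then show "pvalid n (fst p) (snd p)" using f g by (auto simp: PA_def)
  qed
  ultimately show ?thesis by (simp add: PA_def)
qed

lemma PA_add: "f \<in> PA n \<Longrightarrow> g \<in> PA n \<Longrightarrow> (\<lambda>p. f p + g p) \<in> PA n"
  using PA_lin[of f n g 1] by simp
lemma PA_smult: "f \<in> PA n \<Longrightarrow> (\<lambda>p. c * f p) \<in> PA n"
  using PA_lin[OF _ zero_PA, of f n c] by simp
lemma PA_sub: "f \<in> PA n \<Longrightarrow> g \<in> PA n \<Longrightarrow> (\<lambda>p. f p - g p) \<in> PA n"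
  using PA_lin[of g n f "-1"] by simp

lemma lspan_PB_PA: "f \<in> lspan (PB n) \<Longrightarrow> f \<in> PA n"
proof (induction f rule: lspan.induct)
  case lspan_zero then show ?case by (rule zero_PA)
next
  case (lspan_step s v c)
  then show ?case by (auto simp: PB_def intro!: PA_lin fbasis_PA)
qed

lemma PA_lspan_aux:
  assumes "finite A"
  shows "\<forall>f. {p. f p \<noteq> 0} \<subseteq> A \<and> (\<forall>p\<in>A. pvalid n (fst p) (snd p)) \<longrightarrow> f \<in> lspan (PB n)"
  using assms
proof (induction A rule: finite_induct)
  case empty
  show ?case
  proof (intro allI impI)
    fix f :: "path \<Rightarrow> 'a" assume "{p. f p \<noteq> 0} \<subseteq> {} \<and> (\<forall>p\<in>{}. pvalid n (fst p) (snd p))"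
    then have "f = (\<lambda>_. 0)" by auto
    then show "f \<in> lspan (PB n)" by (simp add: lspan.lspan_zero)
  qed
next
  case (insert x A)
  show ?case
  proof (intro allI impI)
    fix f :: "path \<Rightarrow> 'a" assume h: "{p. f p \<noteq> 0} \<subseteq> insert x A \<and> (\<forall>p\<in>insert x A. pvalid n (fst p) (snd p))"
    let ?g = "f(x := 0)"
    have "{p. ?g p \<noteq> 0} \<subseteq> A" using h by auto
    then have "?g \<in> lspan (PB n)" using insert.IH h by blast
    moreover have "fbasis x \<in> PB n" using h by (auto simp: PB_def)
    ultimately have "(\<lambda>p. f x * fbasis x p + ?g p) \<in> lspan (PB n)" by (rule lspan.lspan_step[rotated])
    moreover have "(\<lambda>p. f x * fbasis x p + ?g p) = f" by (auto simp: fbasis_def)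
    ultimately show "f \<in> lspan (PB n)" by simp
  qed
qed

lemma PA_lspan: "f \<in> PA n \<Longrightarrow> f \<in> lspan (PB n)"
  using PA_lspan_aux[of "{p. f p \<noteq> 0}" n] by (auto simp: PA_def)

lemma PA_iff: "(f \<in> PA n) = (f \<in> lspan (PB n))"
  using PA_lspan lspan_PB_PA by blast

lemma pmult_fbasis_gen:
  "pmult n (fbasis x) (fbasis y) =
    (if pvalid n (fst x) (snd x) \<and> pvalid n (fst y) (snd y) \<and> pend n (fst x) (snd x) = fst y
     then fbasis (fst x, snd x @ snd y) else (\<lambda>_. 0))"
  using pmult_fbasis[of n "fst x" "snd x" "fst y" "snd y"] by simp

lemma pmult_PB: "s \<in> PB n \<Longrightarrow> t \<in> PB n \<Longrightarrow> pmult n s t \<in> lspan (PB n)"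
proof -
  assume "s \<in> PB n" "t \<in> PB n"
  then obtain x y where x: "s = fbasis x" "pvalid n (fst x) (snd x)" and y: "t = fbasis y" "pvalid n (fst y) (snd y)"
    by (auto simp: PB_def)
  show ?thesis
  proof (cases "pend n (fst x) (snd x) = fst y")
    case True
    then have "fbasis (fst x, snd x @ snd y) \<in> PB n" using x y by (auto simp: PB_def pvalid_append)
    then have "fbasis (fst x, snd x @ snd y) \<in> lspan (PB n)" by (rule lspan_base)
    then show ?thesis using x y True by (simp add: pmult_fbasis_gen)
  next
    case False
    then show ?thesis using x y by (simp add: pmult_fbasis_gen lspan.lspan_zero)
  qed
qed

lemma pmult_lspan: "f \<in> lspan (PB n) \<Longrightarrow> g \<in> lspan (PB n) \<Longrightarrow> pmult n f g \<in> lspan (PB n)"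
proof (induction f rule: lspan.induct)
  case lspan_zero then show ?case by (simp add: lspan.lspan_zero)
next
  case (lspan_step s v c)
  have "pmult n s g \<in> lspan (PB n)"
    using lspan_step.prems
  proof (induction g rule: lspan.induct)
    case lspan_zero then show ?case by (simp add: lspan.lspan_zero)
  next
    case (lspan_step t w e)
    then show ?case
      by (simp add: pmult_add_right pmult_smult_right lspan_add lspan_smult pmult_PB \<open>s \<in> PB n\<close>)
  qed
  then show ?case using lspan_step
    by (simp add: pmult_add_left pmult_smult_left lspan_add lspan_smult)
qed

lemma PA_mult: "f \<in> PA n \<Longrightarrow> g \<in> PA n \<Longrightarrow> pmult n f g \<in> PA n"
  by (simp add: PA_iff pmult_lspan)

lemma assoc_b: "pmult n (pmult n (fbasis x) (fbasis y)) (fbasis z) = pmult n (fbasis x) (pmult n (fbasis y) (fbasis z))"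
  by (auto simp: pmult_fbasis_gen pvalid_append pend_append)

lemma assoc1: "f \<in> lspan (PB n) \<Longrightarrow> pmult n (pmult n f (fbasis y)) (fbasis z) = pmult n f (pmult n (fbasis y) (fbasis z))"
proof (induction f rule: lspan.induct)
  case lspan_zero then show ?case by simp
next
  case (lspan_step s v c)
  then show ?case by (auto simp: PB_def pmult_add_left pmult_smult_left assoc_b)
qed

lemma assoc2: "g \<in> lspan (PB n) \<Longrightarrow> f \<in> lspan (PB n) \<Longrightarrow> pmult n (pmult n f g) (fbasis z) = pmult n f (pmult n g (fbasis z))"
proof (induction g rule: lspan.induct)
  case lspan_zero then show ?case by simp
next
  case (lspan_step s v c)
  then show ?case by (auto simp: PB_def pmult_add_left pmult_smult_left pmult_add_right pmult_smult_right assoc1)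
qed

lemma assoc3: "h \<in> lspan (PB n) \<Longrightarrow> f \<in> lspan (PB n) \<Longrightarrow> g \<in> lspan (PB n) \<Longrightarrow> pmult n (pmult n f g) h = pmult n f (pmult n g h)"
proof (induction h rule: lspan.induct)
  case lspan_zero then show ?case by simp
next
  case (lspan_step s v c)
  then show ?case by (auto simp: PB_def pmult_add_right pmult_smult_right assoc2)
qed

lemma assoc: "f \<in> PA n \<Longrightarrow> g \<in> PA n \<Longrightarrow> h \<in> PA n \<Longrightarrow> pmult n (pmult n f g) h = pmult n f (pmult n g h)"
  by (simp add: PA_iff assoc3)

definition PA1 :: "nat \<Rightarrow> nat \<Rightarrow> path" where "PA1 n i = ((i + 1) mod n, [As i, Ar i])"
definition QB :: "nat \<Rightarrow> path" where "QB j = (j, [Ar j, As j])"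

lemma asrc_lt: "aidx a < n \<Longrightarrow> asrc n a < n"
  by (cases a) auto
lemma atgt_lt: "aidx a < n \<Longrightarrow> atgt n a < n"
  by (cases a) auto

lemma arrow_valid: "aidx a < n \<Longrightarrow> pvalid n (asrc n a) [a]"
  using asrc_lt[of a n] atgt_lt[of a n] by simp

lemma arrow_PA: "aidx a < n \<Longrightarrow> arrow n a \<in> PA n"
  unfolding arrow_def using arrow_valid[of a n] fbasis_PA[of n "(asrc n a, [a])"] by simp

lemma vert_PA: "i < n \<Longrightarrow> vert i \<in> PA n"
  unfolding vert_def by (rule fbasis_PA) simp

lemma arrow_prod: "aidx a < n \<Longrightarrow> aidx b < n \<Longrightarrow> atgt n a = asrc n b \<Longrightarrow>
   pmult n (arrow n a) (arrow n b) = fbasis (asrc n a, [a, b])"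
  unfolding arrow_def using arrow_valid[of a n] arrow_valid[of b n]
  by (simp add: pmult_fbasis)

lemma omega_eq: "i < n \<Longrightarrow> omega n i = (\<lambda>p. fbasis (PA1 n i) p - fbasis (QB ((i + 1) mod n)) p)"
proof -
  assume i: "i < n"
  then have n: "n > 0" by simp
  have 1: "pmult n (arrow n (As i)) (arrow n (Ar i)) = fbasis (PA1 n i)"
    using i by (simp add: arrow_prod PA1_def)
  have 2: "pmult n (arrow n (Ar ((i + 1) mod n))) (arrow n (As ((i + 1) mod n))) = fbasis (QB ((i + 1) mod n))"
    using n by (subst arrow_prod) (auto simp: QB_def)
  show ?thesis unfolding omega_def 1 2 psub_def ..
qed

lemma PA1_valid: "i < n \<Longrightarrow> pvalid n (fst (PA1 n i)) (snd (PA1 n i))"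
  by (auto simp: PA1_def)
lemma QB_valid: "j < n \<Longrightarrow> pvalid n (fst (QB j)) (snd (QB j))"
  by (auto simp: QB_def)

lemma omega_PA: "i < n \<Longrightarrow> omega n i \<in> PA n"
  by (simp add: omega_eq PA_sub fbasis_PA PA1_valid QB_valid)

abbreviation OI :: "nat \<Rightarrow> (path \<Rightarrow> 'k::field) set" where "OI n \<equiv> OmegaIdeal n"

lemma OI_lin: "f \<in> OI n \<Longrightarrow> g \<in> OI n \<Longrightarrow> (\<lambda>p. c * f p + e * g p) \<in> OI n"
  unfolding OmegaIdeal_def by (rule lspan_lin)
lemma OI_add: "f \<in> OI n \<Longrightarrow> g \<in> OI n \<Longrightarrow> (\<lambda>p. f p + g p) \<in> OI n"
  unfolding OmegaIdeal_def by (rule lspan_add)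
lemma OI_sub: "f \<in> OI n \<Longrightarrow> g \<in> OI n \<Longrightarrow> (\<lambda>p. f p - g p) \<in> OI n"
  unfolding OmegaIdeal_def by (rule lspan_sub)
lemma OI_smult: "f \<in> OI n \<Longrightarrow> (\<lambda>p. c * f p) \<in> OI n"
  unfolding OmegaIdeal_def by (rule lspan_smult)
lemma OI_zero: "(\<lambda>_. 0) \<in> OI n"
  unfolding OmegaIdeal_def by (rule lspan.lspan_zero)

lemma gen_in_b: "pvalid n (fst x) (snd x) \<Longrightarrow> pvalid n (fst y) (snd y) \<Longrightarrow> i < n \<Longrightarrow>
   pmult n (pmult n (fbasis x) (omega n i)) (fbasis y) \<in> OI n"
  unfolding OmegaIdeal_def by (rule lspan_base) blast

lemma gen_in1: "u \<in> lspan (PB n) \<Longrightarrow> pvalid n (fst y) (snd y) \<Longrightarrow> i < n \<Longrightarrow>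
   pmult n (pmult n u (omega n i)) (fbasis y) \<in> OI n"
proof (induction u rule: lspan.induct)
  case lspan_zero then show ?case by (simp add: OmegaIdeal_def lspan.lspan_zero)
next
  case (lspan_step s v c)
  then show ?case unfolding pmult_add_left pmult_smult_left
    by (intro OI_add OI_smult) (auto simp: PB_def gen_in_b)
qed

lemma gen_in: "v \<in> lspan (PB n) \<Longrightarrow> u \<in> lspan (PB n) \<Longrightarrow> i < n \<Longrightarrow>
   pmult n (pmult n u (omega n i)) v \<in> OI n"
proof (induction v rule: lspan.induct)
  case lspan_zero then show ?case by (simp add: OmegaIdeal_def lspan.lspan_zero)
next
  case (lspan_step s v c)
  then show ?case unfolding pmult_add_right pmult_smult_right
    by (intro OI_add OI_smult) (auto simp: PB_def gen_in1)
qed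

lemma gen_in_PA: "u \<in> PA n \<Longrightarrow> v \<in> PA n \<Longrightarrow> i < n \<Longrightarrow> pmult n (pmult n u (omega n i)) v \<in> OI n"
  by (simp add: PA_iff gen_in)

lemma OI_PA: "w \<in> OI n \<Longrightarrow> w \<in> PA n"
  unfolding OmegaIdeal_def
proof (induction w rule: lspan.induct)
  case lspan_zero then show ?case by (rule zero_PA)
next
  case (lspan_step s v c)
  then show ?case by (auto intro!: PA_lin PA_mult fbasis_PA omega_PA)
qed

definition OGen :: "nat \<Rightarrow> (path \<Rightarrow> 'k::field) set" where
  "OGen n = {pmult n (pmult n (fbasis p) (omega n i)) (fbasis q) | p q i.
      pvalid n (fst p) (snd p) \<and> pvalid n (fst q) (snd q) \<and> i < n}"

lemma OI_def': "OmegaIdeal n = lspan (OGen n)"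
  by (simp add: OmegaIdeal_def OGen_def)

lemma OI_left: "w \<in> OI n \<Longrightarrow> f \<in> PA n \<Longrightarrow> pmult n f w \<in> OI n"
  unfolding OI_def'
proof (induction w rule: lspan.induct)
  case lspan_zero then show ?case by (simp add: lspan.lspan_zero)
next
  case (lspan_step s v c)
  from lspan_step(1) obtain x y i where s: "s = pmult n (pmult n (fbasis x) (omega n i)) (fbasis y)"
    and x: "pvalid n (fst x) (snd x)" and y: "pvalid n (fst y) (snd y)" and i: "i < n" unfolding OGen_def by blast
  have xP: "fbasis x \<in> PA n" and yP: "fbasis y \<in> PA n" and oP: "omega n i \<in> PA n"
    using x y i by (auto intro: fbasis_PA omega_PA)
  have "pmult n f s = pmult n (pmult n (pmult n f (fbasis x)) (omega n i)) (fbasis y)"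
  proof -
    have A: "pmult n f (pmult n (pmult n (fbasis x) (omega n i)) (fbasis y)) =
       pmult n (pmult n f (pmult n (fbasis x) (omega n i))) (fbasis y)"
      by (rule assoc[symmetric]) (use xP yP oP lspan_step(4) in \<open>blast intro: PA_mult\<close>)+
    have B: "pmult n f (pmult n (fbasis x) (omega n i)) = pmult n (pmult n f (fbasis x)) (omega n i)"
      by (rule assoc[symmetric]) (use xP yP oP lspan_step(4) in \<open>blast intro: PA_mult\<close>)+
    show ?thesis unfolding s A B ..
  qed
  also have "\<dots> \<in> OI n" using lspan_step(4) xP yP i by (intro gen_in_PA PA_mult)
  finally have "pmult n f s \<in> lspan (OGen n)" unfolding OI_def' .
  then show ?case unfolding pmult_add_right pmult_smult_right using lspan_step by (intro lspan_add lspan_smult) auto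
qed

lemma OI_right: "w \<in> OI n \<Longrightarrow> f \<in> PA n \<Longrightarrow> pmult n w f \<in> OI n"
  unfolding OI_def'
proof (induction w rule: lspan.induct)
  case lspan_zero then show ?case by (simp add: lspan.lspan_zero)
next
  case (lspan_step s v c)
  from lspan_step(1) obtain x y i where s: "s = pmult n (pmult n (fbasis x) (omega n i)) (fbasis y)"
    and x: "pvalid n (fst x) (snd x)" and y: "pvalid n (fst y) (snd y)" and i: "i < n" unfolding OGen_def by blast
  have xP: "fbasis x \<in> PA n" and yP: "fbasis y \<in> PA n" and oP: "omega n i \<in> PA n"
    using x y i by (auto intro: fbasis_PA omega_PA)
  have "pmult n s f = pmult n (pmult n (fbasis x) (omega n i)) (pmult n (fbasis y) f)"
    unfolding s
    by (rule assoc) (use xP yP oP lspan_step(4) in \<open>blast intro: PA_mult\<close>)+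
  also have "\<dots> \<in> OI n" using lspan_step(4) xP yP i by (intro gen_in_PA PA_mult)
  finally have "pmult n s f \<in> lspan (OGen n)" unfolding OI_def' .
  then show ?case unfolding pmult_add_left pmult_smult_left using lspan_step by (intro lspan_add lspan_smult) auto
qed

lemma omega_in_OI: "i < n \<Longrightarrow> omega n i \<in> OI n"
proof -
  assume i: "i < n"
  let ?j = "(i + 1) mod n"
  have j: "?j < n" using i by simp
  have "pmult n (pmult n (fbasis (?j, [])) (omega n i)) (fbasis (?j, [])) = omega n i"
    using i j by (simp add: omega_eq pmult_diff_right pmult_diff_left pmult_fbasis_gen PA1_def QB_def)
  moreover have "pmult n (pmult n (fbasis (?j, [])) (omega n i)) (fbasis (?j, [])) \<in> OI n"
    using i j by (intro gen_in_b) auto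
  ultimately show ?thesis by metis
qed

definition phi :: "nat \<Rightarrow> nat \<Rightarrow> (path \<Rightarrow> 'k::field) \<Rightarrow> 'k" where
  "phi n l f = f (l, [Ar l, As l]) + f (l, [As ((l + n - 1) mod n), Ar ((l + n - 1) mod n)])"

lemma mod_pred: "(i::nat) < n \<Longrightarrow> l < n \<Longrightarrow> ((i + 1) mod n = l) = (i = (l + n - 1) mod n)"
proof -
  assume i: "i < n" and l: "l < n"
  have e: "(l + n - 1) mod n = (if l = 0 then n - 1 else l - 1)"
  proof (cases "l = 0")
    case True then show ?thesis using l by simp
  next
    case False
    then have "l + n - 1 = (l - 1) + n" by simp
    then have "(l + n - 1) mod n = (l - 1) mod n" by simp
    also have "\<dots> = l - 1" using l by simp
    finally show ?thesis using False by simp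
  qed
  have f: "(i + 1) mod n = (if i + 1 = n then 0 else i + 1)" using i by auto
  show ?thesis unfolding e f using i l by auto
qed

lemma app3_eq2: "(xs @ [a, b] @ ys = [c, d]) = (xs = [] \<and> ys = [] \<and> a = c \<and> b = d)"
proof
  assume h: "xs @ [a, b] @ ys = [c, d]"
  then have "length xs + 2 + length ys = 2" by (metis length_Cons length_append list.size(3) add_2_eq_Suc' add.assoc numeral_2_eq_2)
  then have "xs = [] \<and> ys = []" by simp
  then show "xs = [] \<and> ys = [] \<and> a = c \<and> b = d" using h by simp
qed simp

lemma app3_eq2a: "(xs @ a # b # ys = [c, d]) = (xs = [] \<and> ys = [] \<and> a = c \<and> b = d)"
  using app3_eq2[of xs a b ys c d] by simp
lemma app3_eq2b: "([c, d] = xs @ a # b # ys) = (xs = [] \<and> ys = [] \<and> a = c \<and> b = d)"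
  using app3_eq2a[of xs a b ys c d] by (metis)

lemma phi_gen: "pvalid n (fst x) (snd x) \<Longrightarrow> pvalid n (fst y) (snd y) \<Longrightarrow> i < n \<Longrightarrow> l < n \<Longrightarrow>
   phi n l (pmult n (pmult n (fbasis x) (omega n i)) (fbasis y)) = 0"
proof -
  assume x: "pvalid n (fst x) (snd x)" and y: "pvalid n (fst y) (snd y)" and i: "i < n" and l: "l < n"
  obtain v xs where xv: "x = (v, xs)" by (cases x)
  obtain w ys where yw: "y = (w, ys)" by (cases y)
  let ?j = "(i + 1) mod n"
  have j: "?j < n" using i by simp
  have mp: "((i + 1) mod n = l) = (i = (l + n - 1) mod n)" by (rule mod_pred[OF i l])
  have P: "pmult n (pmult n (fbasis (v, xs)) (omega n i)) (fbasis (w, ys)) =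
     (if pend n v xs = ?j \<and> w = ?j then (\<lambda>p. fbasis (v, xs @ [As i, Ar i] @ ys) p - fbasis (v, xs @ [Ar ?j, As ?j] @ ys) p)
      else (\<lambda>_. 0))"
  proof (cases "pend n v xs = ?j")
    case True
    then show ?thesis using x y i j unfolding xv yw
      by (auto simp: omega_eq pmult_diff_right pmult_diff_left pmult_fbasis_gen PA1_def QB_def pvalid_append pend_append)
  next
    case False
    then show ?thesis using x y i j unfolding xv yw
      by (auto simp: omega_eq pmult_diff_right pmult_diff_left pmult_fbasis_gen PA1_def QB_def pvalid_append pend_append)
  qed
  show ?thesis
    unfolding xv yw P using mp
    by (auto simp: phi_def fbasis_def app3_eq2 app3_eq2a app3_eq2b)
qed

lemma phi_lin: "phi n l (\<lambda>p. c * f p + g p) = c * phi n l f + phi n l g"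
  by (simp add: phi_def algebra_simps)

lemma phi_OI: "w \<in> OI n \<Longrightarrow> l < n \<Longrightarrow> phi n l w = 0"
  unfolding OI_def'
proof (induction w rule: lspan.induct)
  case lspan_zero then show ?case by (simp add: phi_def)
next
  case (lspan_step s v c)
  from lspan_step(1) obtain x y i where s: "s = pmult n (pmult n (fbasis x) (omega n i)) (fbasis y)"
    and x: "pvalid n (fst x) (snd x)" and y: "pvalid n (fst y) (snd y)" and i: "i < n" unfolding OGen_def by blast
  have "phi n l s = 0" unfolding s by (rule phi_gen[OF x y i lspan_step(4)])
  then show ?case unfolding phi_lin using lspan_step by simp
qed

lemma QB_notin: "l < n \<Longrightarrow> phi n l (fbasis (QB l)) = 1"
  by (simp add: phi_def fbasis_def QB_def)

lemma key_notin: "l < n \<Longrightarrow> w \<in> OI n \<Longrightarrow> (\<lambda>p. c * w p + e * fbasis (QB l) p) \<in> OI n \<Longrightarrow> e = 0"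
proof -
  assume l: "l < n" and w: "w \<in> OI n" and h: "(\<lambda>p. c * w p + e * fbasis (QB l) p) \<in> OI n"
  have "phi n l (\<lambda>p. c * w p + e * fbasis (QB l) p) = 0" by (rule phi_OI[OF h l])
  moreover have "phi n l (\<lambda>p. c * w p + e * fbasis (QB l) p) = c * phi n l w + e * phi n l (fbasis (QB l))"
    by (simp add: phi_def algebra_simps)
  ultimately have "c * phi n l w + e * phi n l (fbasis (QB l)) = 0" by simp
  then show "e = 0" unfolding phi_OI[OF w l] QB_notin[OF l] by simp
qed

locale tm =
  fixes n :: nat and lam :: "'k::field" and r m :: nat
    and G X :: "(path \<Rightarrow> 'k) \<Rightarrow> (path \<Rightarrow> 'k)"
  assumes TM: "taft_module_algebra n lam r m G X"
    and lam_nz: "lam \<noteq> 0"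
begin

lemma G_PA: "a \<in> PA n \<Longrightarrow> G a \<in> PA n" using TM by (simp add: taft_module_algebra_def)
lemma X_PA: "a \<in> PA n \<Longrightarrow> X a \<in> PA n" using TM by (simp add: taft_module_algebra_def)

lemma G_lin: "a \<in> PA n \<Longrightarrow> b \<in> PA n \<Longrightarrow> G (\<lambda>p. c * a p + b p) = (\<lambda>p. c * G a p + G b p)"
proof -
  assume a: "a \<in> PA n" and b: "b \<in> PA n"
  have ca: "psmult c a \<in> PA n" using a by (simp add: psmult_def PA_smult)
  have "(\<lambda>p. c * a p + b p) = padd (psmult c a) b" by (simp add: padd_def psmult_def)
  then have "G (\<lambda>p. c * a p + b p) = padd (G (psmult c a)) (G b)" using TM ca b by (simp add: taft_module_algebra_def)
  also have "\<dots> = (\<lambda>p. c * G a p + G b p)" using TM a by (simp add: taft_module_algebra_def padd_def psmult_def)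
  finally show ?thesis .
qed

lemma X_lin: "a \<in> PA n \<Longrightarrow> b \<in> PA n \<Longrightarrow> X (\<lambda>p. c * a p + b p) = (\<lambda>p. c * X a p + X b p)"
proof -
  assume a: "a \<in> PA n" and b: "b \<in> PA n"
  have ca: "psmult c a \<in> PA n" using a by (simp add: psmult_def PA_smult)
  have "(\<lambda>p. c * a p + b p) = padd (psmult c a) b" by (simp add: padd_def psmult_def)
  then have "X (\<lambda>p. c * a p + b p) = padd (X (psmult c a)) (X b)" using TM ca b by (simp add: taft_module_algebra_def)
  also have "\<dots> = (\<lambda>p. c * X a p + X b p)" using TM a by (simp add: taft_module_algebra_def padd_def psmult_def)
  finally show ?thesis .
qed

lemma G_zero: "G (\<lambda>_. 0) = (\<lambda>_. 0)"
proof -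
  have "\<forall>a\<in>PA n. \<forall>c. G (psmult c a) = psmult c (G a) \<and> X (psmult c a) = psmult c (X a)"
    using TM unfolding taft_module_algebra_def by blast
  then have "G (psmult 0 (\<lambda>_. 0)) = psmult 0 (G (\<lambda>_. 0))" using zero_PA[of n] by blast
  then show ?thesis by (simp add: psmult_def)
qed
lemma X_zero: "X (\<lambda>_. 0) = (\<lambda>_. 0)"
proof -
  have "\<forall>a\<in>PA n. \<forall>c. G (psmult c a) = psmult c (G a) \<and> X (psmult c a) = psmult c (X a)"
    using TM unfolding taft_module_algebra_def by blast
  then have "X (psmult 0 (\<lambda>_. 0)) = psmult 0 (X (\<lambda>_. 0))" using zero_PA[of n] by blast
  then show ?thesis by (simp add: psmult_def)
qed

lemma G_add: "a \<in> PA n \<Longrightarrow> b \<in> PA n \<Longrightarrow> G (\<lambda>p. a p + b p) = (\<lambda>p. G a p + G b p)"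
  using G_lin[of a b 1] by simp
lemma X_add: "a \<in> PA n \<Longrightarrow> b \<in> PA n \<Longrightarrow> X (\<lambda>p. a p + b p) = (\<lambda>p. X a p + X b p)"
  using X_lin[of a b 1] by simp
lemma G_sub: "a \<in> PA n \<Longrightarrow> b \<in> PA n \<Longrightarrow> G (\<lambda>p. a p - b p) = (\<lambda>p. G a p - G b p)"
  using G_lin[of b a "-1"] by simp
lemma X_sub: "a \<in> PA n \<Longrightarrow> b \<in> PA n \<Longrightarrow> X (\<lambda>p. a p - b p) = (\<lambda>p. X a p - X b p)"
  using X_lin[of b a "-1"] by simp
lemma G_smult: "a \<in> PA n \<Longrightarrow> G (\<lambda>p. c * a p) = (\<lambda>p. c * G a p)"
  using G_lin[OF _ zero_PA, of a c] G_zero by simp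
lemma X_smult: "a \<in> PA n \<Longrightarrow> X (\<lambda>p. c * a p) = (\<lambda>p. c * X a p)"
  using X_lin[OF _ zero_PA, of a c] X_zero by simp

lemma G_mult: "a \<in> PA n \<Longrightarrow> b \<in> PA n \<Longrightarrow> G (pmult n a b) = pmult n (G a) (G b)"
  using TM by (simp add: taft_module_algebra_def)
lemma X_mult: "a \<in> PA n \<Longrightarrow> b \<in> PA n \<Longrightarrow> X (pmult n a b) = (\<lambda>p. pmult n a (X b) p + pmult n (X a) (G b) p)"
  using TM by (simp add: taft_module_algebra_def padd_def)
lemma XG: "a \<in> PA n \<Longrightarrow> X (G a) = (\<lambda>p. inverse lam * G (X a) p)"
proof -
  assume a: "a \<in> PA n"
  have "G (X a) = psmult lam (X (G a))" using TM a by (simp add: taft_module_algebra_def)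
  then show ?thesis using lam_nz by (auto simp: psmult_def)
qed

lemma descends_iff: "descends n G X = (\<forall>i<n. G (omega n i) \<in> OI n \<and> X (omega n i) \<in> OI n)"
proof
  assume "descends n G X"
  then show "\<forall>i<n. G (omega n i) \<in> OI n \<and> X (omega n i) \<in> OI n"
    by (simp add: descends_def omega_in_OI)
next
  assume H: "\<forall>i<n. G (omega n i) \<in> OI n \<and> X (omega n i) \<in> OI n"
  have "w \<in> OI n \<Longrightarrow> G w \<in> OI n \<and> X w \<in> OI n" for w
    unfolding OI_def'
  proof (induction w rule: lspan.induct)
    case lspan_zero then show ?case by (simp add: G_zero X_zero lspan.lspan_zero)
  next
    case (lspan_step s v c)
    from lspan_step(1) obtain x y i where s: "s = pmult n (pmult n (fbasis x) (omega n i)) (fbasis y)"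
      and x: "pvalid n (fst x) (snd x)" and y: "pvalid n (fst y) (snd y)" and i: "i < n" unfolding OGen_def by blast
    have xP: "fbasis x \<in> PA n" and yP: "fbasis y \<in> PA n" and oP: "omega n i \<in> PA n"
      using x y i by (auto intro: fbasis_PA omega_PA)
    have sP: "s \<in> PA n" unfolding s using xP yP oP by (intro PA_mult)
    have vP: "v \<in> PA n" using lspan_step(2) OI_PA unfolding OI_def' by blast
    have xoP: "pmult n (fbasis x) (omega n i) \<in> PA n" using xP oP by (rule PA_mult)
    have Gs: "G s \<in> OI n"
      unfolding s G_mult[OF xoP yP] G_mult[OF xP oP]
      using H i by (intro OI_right OI_left G_PA xP yP) auto
    have xo: "pmult n (fbasis x) (omega n i) \<in> OI n" using omega_in_OI[OF i] xP by (rule OI_left)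
    have Xs: "X s \<in> OI n"
    proof -
      have GO: "G (omega n i) \<in> OI n" and XO: "X (omega n i) \<in> OI n" using H i by auto
      have T1: "pmult n (pmult n (fbasis x) (omega n i)) (X (fbasis y)) \<in> OI n"
        by (rule OI_right[OF xo X_PA[OF yP]])
      have T2: "pmult n (pmult n (fbasis x) (X (omega n i))) (G (fbasis y)) \<in> OI n"
        by (rule OI_right[OF OI_left[OF XO xP] G_PA[OF yP]])
      have T3: "pmult n (pmult n (X (fbasis x)) (G (omega n i))) (G (fbasis y)) \<in> OI n"
        by (rule OI_right[OF OI_left[OF GO X_PA[OF xP]] G_PA[OF yP]])
      have E: "X s = (\<lambda>p. pmult n (pmult n (fbasis x) (omega n i)) (X (fbasis y)) p +
          (pmult n (pmult n (fbasis x) (X (omega n i))) (G (fbasis y)) p +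
           pmult n (pmult n (X (fbasis x)) (G (omega n i))) (G (fbasis y)) p))"
        unfolding s X_mult[OF xoP yP] X_mult[OF xP oP] pmult_add_left ..
      show ?thesis unfolding E using T1 T2 T3 by (intro OI_add)
    qed
    show ?case unfolding G_lin[OF sP vP] X_lin[OF sP vP]
      using Gs Xs lspan_step(3) unfolding OI_def'[symmetric]
      by (auto intro: OI_lin[where e=1, simplified])
  qed
  then show "descends n G X" by (simp add: descends_def)
qed

end

lemma vert_mult: "i < n \<Longrightarrow> j < n \<Longrightarrow> pmult n (vert i) (vert j) = (if i = j then vert i else (\<lambda>_. 0))"
  by (simp add: vert_def pmult_fbasis)

lemma vert_apply: "vert i (j, []) = (if j = i then 1 else 0)"
  by (simp add: vert_def fbasis_def)

abbreviation VS :: "nat \<Rightarrow> (path \<Rightarrow> 'k::field) set" where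
  "VS n \<equiv> lspan (fbasis ` {p. pvalid n (fst p) (snd p) \<and> snd p = []})"

lemma VS_mult: "V \<in> VS n \<Longrightarrow> j < n \<Longrightarrow>
   pmult n (vert j) V = (\<lambda>p. V (j, []) * vert j p) \<and> pmult n V (vert j) = (\<lambda>p. V (j, []) * vert j p)"
proof (induction V rule: lspan.induct)
  case lspan_zero then show ?case by simp
next
  case (lspan_step s v c)
  from lspan_step(1) obtain u where s: "s = vert u" and u: "u < n"
    by (auto simp: vert_def)
  have "pmult n (vert j) s = (\<lambda>p. s (j, []) * vert j p) \<and> pmult n s (vert j) = (\<lambda>p. s (j, []) * vert j p)"
    unfolding s using u lspan_step(4) by (auto simp: vert_mult vert_apply)
  then show ?case using lspan_step(3,4)
    by (auto simp: pmult_add_left pmult_add_right pmult_smult_left pmult_smult_right algebra_simps)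
qed

locale tmg = tm n lam r m G X for n :: nat and lam :: "'k::field" and r m G X +
  fixes gv :: "nat \<Rightarrow> nat"
  assumes gv_lt: "i < n \<Longrightarrow> gv i < n"
    and gv_inj: "inj_on gv {..<n}"
    and G_vert: "i < n \<Longrightarrow> G (vert i) = vert (gv i)"
    and xlin: "x_linear n X"
begin

lemma X_vert_VS: "i < n \<Longrightarrow> X (vert i) \<in> VS n"
  using xlin by (simp add: x_linear_def)

lemma gamma_exists: "\<exists>\<gamma>. \<forall>i<n. X (vert i) = (\<lambda>p. \<gamma> i * vert i p - \<gamma> i * inverse lam * G (vert i) p)"
proof -
  have "X (vert i) = (\<lambda>p. X (vert i) (i, []) * vert i p - X (vert i) (i, []) * inverse lam * G (vert i) p)"
    if i: "i < n" for i
  proof -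
    define V where "V = X (vert i)"
    define k where "k = gv i"
    define c where "c = V (i, [])"
    define c' where "c' = V (k, [])"
    have k: "k < n" using gv_lt[OF i] by (simp add: k_def)
    have VV: "V \<in> VS n" using X_vert_VS[OF i] by (simp add: V_def)
    have eP: "vert i \<in> PA n" using i by (rule vert_PA)
    have kP: "vert k \<in> PA n" using k by (rule vert_PA)
    have Gi: "G (vert i) = vert k" using G_vert[OF i] by (simp add: k_def)
    have V1: "V = (\<lambda>p. c * vert i p + c' * vert k p)"
    proof -
      have "V = X (pmult n (vert i) (vert i))" using vert_mult[OF i i] unfolding V_def by metis
      also have "\<dots> = (\<lambda>p. pmult n (vert i) V p + pmult n V (vert k) p)"
        unfolding X_mult[OF eP eP] Gi V_def ..
      also have "\<dots> = (\<lambda>p. c * vert i p + c' * vert k p)"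
        using VS_mult[OF VV i] VS_mult[OF VV k] by (simp add: c_def c'_def)
      finally show ?thesis .
    qed
    show ?thesis
    proof (cases "k = i")
      case True
      have e1: "V (i, []) = c + c'" using fun_cong[OF V1, of "(i, [])"] True by (simp add: vert_apply)
      have e2: "c' = c" using True by (simp add: c_def c'_def)
      have "c = c + c" using e1 e2 by (simp add: c_def)
      then have c0: "c = 0" by (metis add_left_cancel add.right_neutral)
      then have "c' = 0" using True by (simp add: c_def c'_def)
      then have V0: "X (vert i) = (\<lambda>_. 0)" using V1 c0 unfolding V_def by simp
      show ?thesis by (simp add: V0)
    next
      case False
      define W where "W = X (vert k)"
      have WV: "W \<in> VS n" using X_vert_VS[OF k] by (simp add: W_def)
      have "(\<lambda>_. 0) = X (pmult n (vert k) (vert i))" using vert_mult[OF k i] False X_zero by metis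
      also have "\<dots> = (\<lambda>p. pmult n (vert k) V p + pmult n W (vert k) p)"
        unfolding X_mult[OF kP eP] Gi V_def W_def ..
      also have "\<dots> = (\<lambda>p. c' * vert k p + W (k, []) * vert k p)"
        using VS_mult[OF VV k] VS_mult[OF WV k] by (simp add: c'_def)
      finally have "(\<lambda>_. 0) = (\<lambda>p. c' * vert k p + W (k, []) * vert k p)" .
      from fun_cong[OF this, of "(k, [])"] have E1: "c' + W (k, []) = 0" by (simp add: vert_apply)
      have gk: "gv k \<noteq> k"
      proof
        assume "gv k = k"
        then have "gv k = gv i" by (simp add: k_def)
        then have "k = i" using gv_inj k i by (auto simp: inj_on_def)
        then show False using False by simp
      qed
      have "W = X (G (vert i))" using Gi by (simp add: W_def)
      also have "\<dots> = (\<lambda>p. inverse lam * G V p)" unfolding XG[OF eP] V_def ..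
      finally have W1: "W = (\<lambda>p. inverse lam * G V p)" .
      have "G V = (\<lambda>p. c * G (vert i) p + c' * G (vert k) p)"
        unfolding V1 G_lin[OF eP PA_smult[OF kP]] G_smult[OF kP] ..
      then have "G V (k, []) = c" using G_vert[OF k] gk Gi by (simp add: vert_apply)
      then have "W (k, []) = inverse lam * c" using W1 by simp
      then have c': "c' = - (inverse lam * c)" using E1 by (simp add: algebra_simps eq_neg_iff_add_eq_0)
      have XV: "X (vert i) = V" by (simp add: V_def)
      have cc: "X (vert i) (i, []) = c" by (simp add: V_def c_def)
      show ?thesis unfolding cc Gi unfolding XV V1 c' by (simp add: algebra_simps)
    qed
  qed
  then have H: "\<forall>i<n. X (vert i) = (\<lambda>p. X (vert i) (i, []) * vert i p - X (vert i) (i, []) * inverse lam * G (vert i) p)"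
    by blast
  show ?thesis by (rule exI[of _ "\<lambda>i. X (vert i) (i, [])"]) (rule H)
qed

lemma gammas_spec: "i < n \<Longrightarrow> X (vert i) = (\<lambda>p. gammas n lam G X i * vert i p - gammas n lam G X i * inverse lam * G (vert i) p)"
  using someI_ex[OF gamma_exists] unfolding gammas_def by blast

end

context tmg
begin

abbreviation "gam \<equiv> gammas n lam G X"
abbreviation "qs \<equiv> qsigma n lam G X"

lemma cross_vert: "v < n \<Longrightarrow> gam v * (1 - inverse lam) * pmult n (vert v) (G (vert v)) p = 0"
proof -
  assume v: "v < n"
  define E where "E = (vert v :: path \<Rightarrow> 'k)"
  define F where "F = G E"
  define g where "g = gam v"
  define li where "li = inverse lam"
  have EP: "E \<in> PA n" using v by (simp add: E_def vert_PA)
  have FP: "F \<in> PA n" using EP by (simp add: F_def G_PA)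
  have XE: "X E = (\<lambda>p. g * E p - g * li * F p)" using gammas_spec[OF v] by (simp add: E_def F_def g_def li_def)
  have EE: "pmult n E E = E" using vert_mult[OF v v] by (simp add: E_def)
  have FF: "pmult n F F = F" using G_mult[OF EP EP] EE by (simp add: F_def)
  have "X E = X (pmult n E E)" using EE by simp
  also have "\<dots> = (\<lambda>p. pmult n E (X E) p + pmult n (X E) F p)" unfolding X_mult[OF EP EP] F_def ..
  also have "\<dots> = (\<lambda>p. g * E p - g * li * pmult n E F p + (g * pmult n E F p - g * li * F p))"
    unfolding XE pmult_diff_right pmult_diff_left pmult_smult_left pmult_smult_right EE FF ..
  finally have "(\<lambda>p. g * E p - g * li * F p) = (\<lambda>p. g * E p - g * li * pmult n E F p + (g * pmult n E F p - g * li * F p))"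
    unfolding XE .
  from fun_cong[OF this, of p] have "g * (1 - li) * pmult n E F p = 0" by (simp add: algebra_simps)
  then show ?thesis by (simp add: E_def F_def g_def li_def)
qed

lemma cross_arrow:
  assumes a: "aidx a < n" and b: "aidx b < n" and ta: "atgt n a = v" and sb: "asrc n b = v"
  shows "gam v * (1 - inverse lam) * pmult n (arrow n a) (G (arrow n b)) p = 0"
proof -
  have v: "v < n" using atgt_lt[OF a] ta by simp
  define E where "E = (vert v :: path \<Rightarrow> 'k)"
  define F where "F = G E"
  define \<kappa> where "\<kappa> = gam v * (1 - inverse lam)"
  have EP: "E \<in> PA n" using v by (simp add: E_def vert_PA)
  have FP: "F \<in> PA n" using EP by (simp add: F_def G_PA)
  have aP: "arrow n a \<in> PA n" using a by (rule arrow_PA)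
  have bP: "arrow n b \<in> PA n" using b by (rule arrow_PA)
  have GbP: "G (arrow n b) \<in> PA n" using bP by (rule G_PA)
  have aE: "pmult n (arrow n a) E = arrow n a"
    using arrow_valid[OF a] v ta by (simp add: E_def arrow_def vert_def pmult_fbasis)
  have Eb: "pmult n E (arrow n b) = arrow n b"
    using arrow_valid[OF b] v sb by (simp add: E_def arrow_def vert_def pmult_fbasis)
  have Gb: "G (arrow n b) = pmult n F (G (arrow n b))"
    using G_mult[OF EP bP] Eb by (simp add: F_def)
  have "pmult n (arrow n a) (G (arrow n b)) = pmult n (pmult n (arrow n a) E) (pmult n F (G (arrow n b)))"
    using aE Gb by simp
  also have "\<dots> = pmult n (arrow n a) (pmult n E (pmult n F (G (arrow n b))))"
    by (rule assoc) (use aP EP FP GbP in \<open>blast intro: PA_mult\<close>)+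
  also have "\<dots> = pmult n (arrow n a) (pmult n (pmult n E F) (G (arrow n b)))"
    by (subst assoc) (use aP EP FP GbP in \<open>blast intro: PA_mult\<close>)+
  finally have eq: "pmult n (arrow n a) (G (arrow n b)) = pmult n (arrow n a) (pmult n (pmult n E F) (G (arrow n b)))" .
  have z: "(\<lambda>p. \<kappa> * pmult n E F p) = (\<lambda>_. 0)"
    using cross_vert[OF v] unfolding \<kappa>_def E_def F_def by (intro ext) (metis mult.assoc)
  have "(\<lambda>p. \<kappa> * pmult n (arrow n a) (G (arrow n b)) p) = pmult n (arrow n a) (pmult n (\<lambda>p. \<kappa> * pmult n E F p) (G (arrow n b)))"
    unfolding eq pmult_smult_left pmult_smult_right ..
  also have "\<dots> = (\<lambda>_. 0)" unfolding z by simp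
  finally show ?thesis using fun_cong by (metis \<kappa>_def)
qed

lemma X_arrow: "X (arrow n a) = (\<lambda>p. qs a p + gam (atgt n a) * arrow n a p - gam (asrc n a) * inverse lam * G (arrow n a) p)"
  by (simp add: qsigma_def)

lemma G_omega: "i < n \<Longrightarrow> G (omega n i) = (\<lambda>p. pmult n (G (arrow n (As i))) (G (arrow n (Ar i))) p
    - pmult n (G (arrow n (Ar ((i + 1) mod n)))) (G (arrow n (As ((i + 1) mod n)))) p)"
proof -
  assume i: "i < n"
  let ?j = "(i + 1) mod n"
  have j: "?j < n" using i by simp
  have P: "arrow n (As i) \<in> PA n" "arrow n (Ar i) \<in> PA n" "arrow n (Ar ?j) \<in> PA n" "arrow n (As ?j) \<in> PA n"
    using i j by (auto intro: arrow_PA)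
  show ?thesis unfolding omega_def psub_def
    unfolding G_sub[OF PA_mult[OF P(1) P(2)] PA_mult[OF P(3) P(4)]] G_mult[OF P(1) P(2)] G_mult[OF P(3) P(4)] ..
qed


lemma X_omega:
  assumes i: "i < n"
  shows "X (omega n i) = (\<lambda>p. (pmult n (arrow n (As i)) (qs (Ar i)) p
                 + pmult n (qs (As i)) (G (arrow n (Ar i))) p
                 - pmult n (arrow n (Ar ((i + 1) mod n))) (qs (As ((i + 1) mod n))) p
                 - pmult n (qs (Ar ((i + 1) mod n))) (G (arrow n (As ((i + 1) mod n)))) p)
        + gam ((i + 1) mod n) * omega n i p - gam ((i + 1) mod n) * inverse lam * G (omega n i) p)"
proof -
  define j where "j = (i + 1) mod n"
  have j: "j < n" using i by (simp add: j_def)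
  have jf: "(i + 1) mod n = j" by (simp add: j_def)
  have P: "arrow n (As i) \<in> PA n" "arrow n (Ar i) \<in> PA n" "arrow n (Ar j) \<in> PA n" "arrow n (As j) \<in> PA n"
    using i j by (auto intro: arrow_PA)
  have c1: "gam i * (1 - inverse lam) * pmult n (arrow n (As i)) (G (arrow n (Ar i))) p = 0" for p
    using i by (intro cross_arrow) auto
  have c2: "gam ((j + 1) mod n) * (1 - inverse lam) * pmult n (arrow n (Ar j)) (G (arrow n (As j))) p = 0" for p
    using j by (intro cross_arrow) auto
  have XO: "X (omega n i) = (\<lambda>p. (pmult n (arrow n (As i)) (X (arrow n (Ar i))) p + pmult n (X (arrow n (As i))) (G (arrow n (Ar i))) p)
     - (pmult n (arrow n (Ar j)) (X (arrow n (As j))) p + pmult n (X (arrow n (Ar j))) (G (arrow n (As j))) p))"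
    unfolding omega_def psub_def j_def[symmetric]
    unfolding X_sub[OF PA_mult[OF P(1) P(2)] PA_mult[OF P(3) P(4)]] X_mult[OF P(1) P(2)] X_mult[OF P(3) P(4)] ..
  have GO: "G (omega n i) = (\<lambda>p. pmult n (G (arrow n (As i))) (G (arrow n (Ar i))) p
    - pmult n (G (arrow n (Ar j))) (G (arrow n (As j))) p)"
    using G_omega[OF i] by (simp add: j_def)
  have OM: "omega n i = (\<lambda>p. pmult n (arrow n (As i)) (arrow n (Ar i)) p - pmult n (arrow n (Ar j)) (arrow n (As j)) p)"
    unfolding omega_def psub_def j_def ..
  show ?thesis
    unfolding j_def[symmetric] XO GO
    unfolding OM X_arrow
    unfolding pmult_add_left pmult_add_right pmult_diff_left pmult_diff_right pmult_smult_left pmult_smult_right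
    apply (rule ext)
    subgoal for p
      apply (simp only: atgt.simps asrc.simps jf)
      apply (rule eq_iff_diff_eq_0[THEN iffD2])
      apply (rule trans[of _ "gam i * (1 - inverse lam) * pmult n (arrow n (As i)) (G (arrow n (Ar i))) p
          - gam ((j + 1) mod n) * (1 - inverse lam) * pmult n (arrow n (Ar j)) (G (arrow n (As j))) p"])
       apply (simp add: algebra_simps)
      unfolding c1[of p] c2[of p] by simp
    done
qed

end

lemma mod_cancel_lt: "(i::nat) < n \<Longrightarrow> i' < n \<Longrightarrow> (x + i) mod n = (x + i') mod n \<Longrightarrow> i = i'"
proof -
  assume i: "i < n" and i': "i' < n" and h: "(x + i) mod n = (x + i') mod n"
  show "i = i'"
  proof (cases "i \<le> i'")
    case True
    then have "n dvd (x + i') - (x + i)" using h mod_eq_dvd_iff_nat[of "x + i" "x + i'" n] by simp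
    then have "n dvd i' - i" by simp
    moreover have "i' - i < n" using i' by simp
    ultimately have "i' - i = 0" by (metis dvd_imp_le not_less zero_less_iff_neq_zero)
    then show ?thesis using True by simp
  next
    case False
    then have "n dvd (x + i) - (x + i')" using h mod_eq_dvd_iff_nat[of "x + i'" "x + i" n] by simp
    then have "n dvd i - i'" by simp
    moreover have "i - i' < n" using i by simp
    ultimately have "i - i' = 0" by (metis dvd_imp_le not_less zero_less_iff_neq_zero)
    then show ?thesis using False by simp
  qed
qed

lemma rot_inj: "inj_on (\<lambda>i. (i + d) mod n) {..<(n::nat)}"
  unfolding inj_on_def
proof (intro ballI impI)
  fix i i' assume "i \<in> {..<n}" "i' \<in> {..<n}" "(i + d) mod n = (i' + d) mod n"
  then show "i = i'" using mod_cancel_lt[of i n i' d] by (simp add: add.commute)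
qed

lemma refl_inj: "(d::nat) < n \<Longrightarrow> inj_on (\<lambda>i. (2 * n - (d + i)) mod n) {..<n}"
  unfolding inj_on_def
proof (intro ballI impI)
  fix i i' assume d: "d < n" and i: "i \<in> {..<n}" and i': "i' \<in> {..<n}"
    and h: "(2 * n - (d + i)) mod n = (2 * n - (d + i')) mod n"
  define a where "a = 2 * n - (d + i)"
  define a' where "a' = 2 * n - (d + i')"
  have ai: "a + i = 2 * n - d" using d i by (simp add: a_def)
  have ai': "a' + i' = 2 * n - d" using d i' by (simp add: a'_def)
  have "(a + i + i') mod n = (a' + i' + i) mod n"
  proof -
    have "(a + i + i') mod n = (a mod n + (i + i')) mod n" by (simp add: mod_simps add.assoc)
    also have "\<dots> = (a' mod n + (i + i')) mod n" using h by (simp add: a_def a'_def)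
    also have "\<dots> = (a' + (i + i')) mod n" by (rule mod_add_left_eq)
    also have "\<dots> = (a' + i' + i) mod n" by (simp add: ac_simps)
    finally show ?thesis .
  qed
  then have "(2 * n - d + i') mod n = (2 * n - d + i) mod n" using ai ai' by simp
  then show "i = i'" using mod_cancel_lt[of i n i' "2 * n - d"] i i' by simp
qed

lemma rot_mod: "((i + d) mod n + 1) mod (n::nat) = ((i + 1) mod n + d) mod n"
  by (simp add: mod_simps add.commute add.left_commute)

lemma refl_mod: "(i::nat) < n \<Longrightarrow> d < n \<Longrightarrow>
   ((2 * n - (d + (i + 1) mod n + 1)) mod n + 1) mod n = (2 * n - (d + i + 1)) mod n"
proof -
  assume i: "i < n" and d: "d < n"
  show ?thesis
  proof (cases "i + 1 < n")
    case True
    then have "(i + 1) mod n = i + 1" by simp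
    then have "((2 * n - (d + (i + 1) mod n + 1)) mod n + 1) mod n = (2 * n - (d + i + 2) + 1) mod n"
      by (simp add: mod_simps)
    also have "2 * n - (d + i + 2) + 1 = 2 * n - (d + i + 1)" using True d by simp
    finally show ?thesis .
  next
    case False
    then have e: "i + 1 = n" using i by simp
    then have "(i + 1) mod n = 0" by simp
    then have "((2 * n - (d + (i + 1) mod n + 1)) mod n + 1) mod n = (2 * n - (d + 1) + 1) mod n"
      by (simp add: mod_simps)
    also have "2 * n - (d + 1) + 1 = (2 * n - (d + i + 1)) + n" using e d by simp
    also have "\<dots> mod n = (2 * n - (d + i + 1)) mod n" by simp
    finally show ?thesis .
  qed
qed

lemma psm_prod: "pmult n (psmult a f) (psmult b g) = (\<lambda>p. a * (b * pmult n f g p))"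
  unfolding psmult_def pmult_smult_left pmult_smult_right ..

lemma sig_iff:
  assumes F: "F = (\<lambda>p. S p + a * w p - b * v p)" and w: "w \<in> OI n" and v: "v \<in> OI n"
  shows "(F \<in> OI n) = (S \<in> OI n)"
proof
  assume "F \<in> OI n"
  then have "(\<lambda>p. F p - (a * w p - b * v p)) \<in> OI n"
    using w v by (intro OI_sub OI_smult) auto
  moreover have "(\<lambda>p. F p - (a * w p - b * v p)) = S" unfolding F by (simp add: algebra_simps)
  ultimately show "S \<in> OI n" by simp
next
  assume "S \<in> OI n"
  then have "(\<lambda>p. S p + (a * w p - b * v p)) \<in> OI n"
    using w v by (intro OI_add OI_sub OI_smult) auto
  moreover have "(\<lambda>p. S p + (a * w p - b * v p)) = F" unfolding F by (simp add: algebra_simps)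
  ultimately show "F \<in> OI n" by simp
qed

lemma mu_iff:
  assumes l: "l < n" and k: "k < n"
    and GO: "Go = (\<lambda>p. c * omega n k p + e * fbasis (QB l) p)"
  shows "(Go \<in> OI n) = (e = 0)"
proof
  assume "Go \<in> OI n"
  then show "e = 0" using key_notin[OF l omega_in_OI[OF k]] GO by blast
next
  assume "e = 0"
  then have "Go = (\<lambda>p. c * omega n k p)" using GO by simp
  then show "Go \<in> OI n" using OI_smult[OF omega_in_OI[OF k], of c] by simp
qed

context tmg
begin

lemma G_omega_rot:
  assumes rot: "g_rotation n d mu mus G" and i: "i < n"
  shows "G (omega n i) = (\<lambda>p. (mu i * mus i) * omega n ((i + d) mod n) p
     + (mu i * mus i - mu ((i + 1) mod n) * mus ((i + 1) mod n)) * fbasis (QB (((i + 1) mod n + d) mod n)) p)"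
proof -
  define j where "j = (i + 1) mod n"
  define k where "k = (i + d) mod n"
  define k' where "k' = (j + d) mod n"
  have j: "j < n" using i by (simp add: j_def)
  have k: "k < n" using i by (simp add: k_def)
  have k': "k' < n" using i by (simp add: k'_def)
  have kk: "(k + 1) mod n = k'" unfolding k_def k'_def j_def by (rule rot_mod)
  have G1: "G (arrow n (As i)) = psmult (mus i) (arrow n (As k))"
    and G2: "G (arrow n (Ar i)) = psmult (mu i) (arrow n (Ar k))"
    using rot i by (auto simp: g_rotation_def k_def)
  have G3: "G (arrow n (As j)) = psmult (mus j) (arrow n (As k'))"
    and G4: "G (arrow n (Ar j)) = psmult (mu j) (arrow n (Ar k'))"
    using rot j by (auto simp: g_rotation_def k'_def)
  have P1: "pmult n (arrow n (As k)) (arrow n (Ar k)) = fbasis (PA1 n k)"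
    using k by (simp add: arrow_prod PA1_def)
  have P2: "pmult n (arrow n (Ar k')) (arrow n (As k')) = fbasis (QB k')"
    using k' by (subst arrow_prod) (auto simp: QB_def)
  have "G (omega n i) = (\<lambda>p. mus i * (mu i * fbasis (PA1 n k) p) - mu j * (mus j * fbasis (QB k') p))"
    unfolding G_omega[OF i] j_def[symmetric] G1 G2 G3 G4 psm_prod P1 P2 ..
  also have "\<dots> = (\<lambda>p. (mu i * mus i) * omega n k p + (mu i * mus i - mu j * mus j) * fbasis (QB k') p)"
    unfolding omega_eq[OF k] kk by (simp add: algebra_simps)
  finally show ?thesis by (simp add: j_def k_def k'_def)
qed

lemma G_omega_refl:
  assumes rfl: "g_reflection n d mu mus G" and i: "i < n" and d: "d < n"
  shows "G (omega n i) = (\<lambda>p. (- (mu ((i + 1) mod n) * mus ((i + 1) mod n))) * omega n ((2 * n - (d + (i + 1) mod n + 1)) mod n) p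
     + (mu i * mus i - mu ((i + 1) mod n) * mus ((i + 1) mod n)) * fbasis (QB ((2 * n - (d + i + 1)) mod n)) p)"
proof -
  define j where "j = (i + 1) mod n"
  define k where "k = (2 * n - (d + i + 1)) mod n"
  define k' where "k' = (2 * n - (d + j + 1)) mod n"
  have j: "j < n" using i by (simp add: j_def)
  have k: "k < n" using i by (simp add: k_def)
  have k': "k' < n" using i by (simp add: k'_def)
  have kk: "(k' + 1) mod n = k" unfolding k_def k'_def j_def by (rule refl_mod[OF i d])
  have G1: "G (arrow n (As i)) = psmult (mus i) (arrow n (Ar k))"
    and G2: "G (arrow n (Ar i)) = psmult (mu i) (arrow n (As k))"
    using rfl i by (auto simp: g_reflection_def k_def)
  have G3: "G (arrow n (As j)) = psmult (mus j) (arrow n (Ar k'))"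
    and G4: "G (arrow n (Ar j)) = psmult (mu j) (arrow n (As k'))"
    using rfl j by (auto simp: g_reflection_def k'_def)
  have P1: "pmult n (arrow n (As k')) (arrow n (Ar k')) = fbasis (PA1 n k')"
    using k' by (simp add: arrow_prod PA1_def)
  have P2: "pmult n (arrow n (Ar k)) (arrow n (As k)) = fbasis (QB k)"
    using k by (subst arrow_prod) (auto simp: QB_def)
  have "G (omega n i) = (\<lambda>p. mus i * (mu i * fbasis (QB k) p) - mu j * (mus j * fbasis (PA1 n k') p))"
    unfolding G_omega[OF i] j_def[symmetric] G1 G2 G3 G4 psm_prod P1 P2 ..
  also have "\<dots> = (\<lambda>p. (- (mu j * mus j)) * omega n k' p + (mu i * mus i - mu j * mus j) * fbasis (QB k) p)"
    unfolding omega_eq[OF k'] kk by (simp add: algebra_simps)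
  finally show ?thesis by (simp add: j_def k_def k'_def)
qed

lemma G_mu:
  assumes g: "g_rotation n d mu mus G \<or> g_reflection n d mu mus G" and i: "i < n" and d: "d < n"
  shows "(G (omega n i) \<in> OI n) = (mu i * mus i - mu ((i + 1) mod n) * mus ((i + 1) mod n) = 0)"
  using g
proof
  assume rot: "g_rotation n d mu mus G"
  show ?thesis
    by (rule mu_iff[OF _ _ G_omega_rot[OF rot i]]) (use i in simp_all)
next
  assume rfl: "g_reflection n d mu mus G"
  show ?thesis
    by (rule mu_iff[OF _ _ G_omega_refl[OF rfl i d]]) (use i in simp_all)
qed

end

theorem lemma2p7:
  fixes n r m d :: nat and lam :: "'k::field"
    and G X :: "(path \<Rightarrow> 'k) \<Rightarrow> (path \<Rightarrow> 'k)"
    and mu mus :: "nat \<Rightarrow> 'k"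
  assumes "r > 1" and "m > 0" and "r dvd m"
    and "lam ^ r = 1" and "\<forall>k. 0 < k \<and> k < r \<longrightarrow> lam ^ k \<noteq> 1"
    and "of_nat r \<noteq> (0::'k)"
    and "n \<ge> 3" and "d < n"
    and "\<forall>i<n. mu i \<noteq> 0 \<and> mus i \<noteq> 0"
    and "taft_module_algebra n lam r m G X"
    and "x_linear n X"
    and "inner_faithful n lam r m G X"
    and "g_rotation n d mu mus G \<or> g_reflection n d mu mus G"
  shows "descends n G X \<longleftrightarrow>
     ((\<forall>i<n. mu i * mus i - mu ((i + 1) mod n) * mus ((i + 1) mod n) = 0) \<and>
      (\<forall>i<n. (\<lambda>p. pmult n (arrow n (As i)) (qsigma n lam G X (Ar i)) p
                 + pmult n (qsigma n lam G X (As i)) (G (arrow n (Ar i))) p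
                 - pmult n (arrow n (Ar ((i + 1) mod n))) (qsigma n lam G X (As ((i + 1) mod n))) p
                 - pmult n (qsigma n lam G X (Ar ((i + 1) mod n))) (G (arrow n (As ((i + 1) mod n)))) p)
             \<in> OmegaIdeal n))"
proof -
  have n0: "n > 0" using assms(7) by simp
  have lnz: "lam \<noteq> 0"
  proof
    assume "lam = 0"
    then have "lam ^ r = 0" using assms(1) by simp
    then show False using assms(4) by simp
  qed
  have "\<exists>gv. (\<forall>i<n. gv i < n) \<and> inj_on gv {..<n} \<and> (\<forall>i<n. G (vert i) = vert (gv i))"
    using assms(13)
  proof
    assume rot: "g_rotation n d mu mus G"
    show ?thesis
      by (rule exI[of _ "\<lambda>i. (i + d) mod n"]) (use rot n0 rot_inj in \<open>auto simp: g_rotation_def\<close>)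
  next
    assume rfl: "g_reflection n d mu mus G"
    show ?thesis
      by (rule exI[of _ "\<lambda>i. (2 * n - (d + i)) mod n"]) (use rfl n0 refl_inj[OF assms(8)] in \<open>auto simp: g_reflection_def\<close>)
  qed
  then obtain gv where gv1: "\<forall>i<n. gv i < n" and gv2: "inj_on gv {..<n}" and gv3: "\<forall>i<n. G (vert i) = vert (gv i)"
    by blast
  interpret tmg n lam r m G X gv
    by unfold_locales (use assms(10) lnz gv1 gv2 gv3 assms(11) in auto)
  have Geq: "(G (omega n i) \<in> OI n) = (mu i * mus i - mu ((i + 1) mod n) * mus ((i + 1) mod n) = 0)"
    if i: "i < n" for i
    by (rule G_mu[OF assms(13) i assms(8)])
  have Xeq: "(X (omega n i) \<in> OI n) =
      ((\<lambda>p. pmult n (arrow n (As i)) (qsigma n lam G X (Ar i)) p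
                 + pmult n (qsigma n lam G X (As i)) (G (arrow n (Ar i))) p
                 - pmult n (arrow n (Ar ((i + 1) mod n))) (qsigma n lam G X (As ((i + 1) mod n))) p
                 - pmult n (qsigma n lam G X (Ar ((i + 1) mod n))) (G (arrow n (As ((i + 1) mod n)))) p)
             \<in> OmegaIdeal n)"
    if i: "i < n" and GO: "G (omega n i) \<in> OI n" for i
    by (rule sig_iff[OF X_omega[OF i] omega_in_OI[OF i] GO])
  show ?thesis
    unfolding descends_iff
    using Geq Xeq by blast
qed

end
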